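(* Let $T\subseteq S_k$, let $p\geq 1$, and let $n\geq k+p+1$. Then $S_n(\nu^p(T))=S_n(T)$.
   Context: Two sequences are order-isomorphic if they have the same length $m$ and for all $i<j$, $x_i<x_j$ iff $y_i<y_j$. A permutation $\sigma\in S_n$ contains $\pi\in S_m$ if some subsequence $(\sigma_{i_1},\dots,\sigma_{i_m})$, $i_1<\dots<i_m$, is order-isomorphic to $\pi$; otherwise it avoids $\pi$. For a set $A$ of permutations, $S_n(A)$ is the set of permutations in $S_n$ avoiding every element of $A$. For $\tau\in S_k$ and $m\ge k$, $V_\tau^m$ is the set of all $\alpha\in S_m$ that contain $\tau$. For $T\subseteq S_k$ (any $k$), $\nu(T)=\bigcup_{\tau\in T}V_\tau^{k+1}\subseteq S_{k+1}$; $\nu^1=\nu$ and $\nu^p(T)=\nu(\nu^{p-1}(T))\subseteq S_{k+p}$ for $p>1$. *)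

theory Defs
  imports Main
begin

text \<open>Permutations of length n are represented as lists of naturals: S_n is the set of
  lists that are arrangements of 1..n (one-line notation).\<close>

definition perms :: "nat \<Rightarrow> nat list set" where
  "perms n = {xs. distinct xs \<and> set xs = {1..n}}"

definition order_iso :: "nat list \<Rightarrow> nat list \<Rightarrow> bool" where
  "order_iso xs ys \<longleftrightarrow> length xs = length ys \<and>
     (\<forall>i j. i < j \<and> j < length xs \<longrightarrow> (xs ! i < xs ! j \<longleftrightarrow> ys ! i < ys ! j))"

definition contains :: "nat list \<Rightarrow> nat list \<Rightarrow> bool" where
  "contains \<sigma> \<pi> \<longleftrightarrow> (\<exists>I. I \<subseteq> {..<length \<sigma>} \<and> order_iso (nths \<sigma> I) \<pi>)"

definition avoiders :: "nat \<Rightarrow> nat list set \<Rightarrow> nat list set" where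
  "avoiders n A = {\<sigma> \<in> perms n. \<forall>\<pi>\<in>A. \<not> contains \<sigma> \<pi>}"

definition V :: "nat list \<Rightarrow> nat \<Rightarrow> nat list set" where
  "V \<tau> m = {\<alpha> \<in> perms m. contains \<alpha> \<tau>}"

definition nu :: "nat \<Rightarrow> nat list set \<Rightarrow> nat list set" where
  "nu k T = (\<Union>\<tau>\<in>T. V \<tau> (k + 1))"

fun nu_pow :: "nat \<Rightarrow> nat \<Rightarrow> nat list set \<Rightarrow> nat list set" where
  "nu_pow p k T = (if p = 0 then T else nu (k + (p - 1)) (nu_pow (p - 1) k T))"

end

theory Submission
  imports Defs "HOL-Library.Sublist"
begin

definition Rel :: "nat \<times> nat \<Rightarrow> nat \<times> nat \<Rightarrow> bool" where
  "Rel a b \<longleftrightarrow> (fst a < fst b \<longleftrightarrow> snd a < snd b)"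

lemma order_iso_alt:
  "order_iso xs ys \<longleftrightarrow> length xs = length ys \<and> sorted_wrt Rel (zip xs ys)"
  unfolding order_iso_def sorted_wrt_iff_nth_less Rel_def by auto

lemma order_iso_refl: "order_iso xs xs"
  unfolding order_iso_def by auto

lemma order_iso_sym: "order_iso xs ys \<Longrightarrow> order_iso ys xs"
  unfolding order_iso_def by auto

lemma order_iso_trans: "order_iso xs ys \<Longrightarrow> order_iso ys zs \<Longrightarrow> order_iso xs zs"
  unfolding order_iso_def by auto

lemma sorted_wrt_subseq: "subseq xs ys \<Longrightarrow> sorted_wrt R ys \<Longrightarrow> sorted_wrt R xs"
proof (induction rule: list_emb.induct)
  case (list_emb_Nil ys)
  then show ?case by simp
next
  case (list_emb_Cons xs ys y)
  then show ?case by simp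
next
  case (list_emb_Cons2 x y xs ys)
  then show ?case using list_emb_set by fastforce
qed

lemma subseq_zip:
  "subseq zs xs \<Longrightarrow> length xs = length ys \<Longrightarrow>
   \<exists>ws. subseq ws ys \<and> length ws = length zs \<and> subseq (zip zs ws) (zip xs ys)"
proof (induction arbitrary: ys rule: list_emb.induct)
  case (list_emb_Nil ys')
  then show ?case by (intro exI[of _ "[]"]) auto
next
  case (list_emb_Cons xs ys' y)
  then obtain b bs where ys: "ys = b # bs" by (cases ys) auto
  from list_emb_Cons obtain ws where "subseq ws bs" "length ws = length xs"
     "subseq (zip xs ws) (zip ys' bs)" using ys by auto
  then show ?case using ys by (intro exI[of _ ws]) auto
next
  case (list_emb_Cons2 x y xs ys')
  then obtain b bs where ys: "ys = b # bs" by (cases ys) auto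
  from list_emb_Cons2 obtain ws where "subseq ws bs" "length ws = length xs"
     "subseq (zip xs ws) (zip ys' bs)" using ys by auto
  then show ?case using ys list_emb_Cons2 by (intro exI[of _ "b # ws"]) auto
qed

lemma order_iso_subseq:
  assumes "subseq zs xs" "order_iso xs ys"
  shows "\<exists>ws. subseq ws ys \<and> order_iso zs ws"
proof -
  from assms have l: "length xs = length ys" and s: "sorted_wrt Rel (zip xs ys)"
    by (auto simp: order_iso_alt)
  obtain ws where "subseq ws ys" "length ws = length zs" "subseq (zip zs ws) (zip xs ys)"
    using subseq_zip[OF assms(1) l] by blast
  moreover have "sorted_wrt Rel (zip zs ws)" using sorted_wrt_subseq[OF _ s] calculation(3) by blast
  ultimately show ?thesis by (intro exI[of _ ws]) (auto simp: order_iso_alt)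
qed

lemma contains_alt: "contains \<sigma> \<pi> \<longleftrightarrow> (\<exists>xs. subseq xs \<sigma> \<and> order_iso xs \<pi>)"
proof
  assume "contains \<sigma> \<pi>"
  then show "\<exists>xs. subseq xs \<sigma> \<and> order_iso xs \<pi>"
    unfolding contains_def subseq_conv_nths by blast
next
  assume "\<exists>xs. subseq xs \<sigma> \<and> order_iso xs \<pi>"
  then obtain N where "order_iso (nths \<sigma> N) \<pi>" unfolding subseq_conv_nths by blast
  moreover have "nths \<sigma> N = nths \<sigma> (N \<inter> {..<length \<sigma>})"
    unfolding nths_def by (rule arg_cong[where f="map fst"], rule filter_cong) (auto dest: set_zip_rightD)
  ultimately show "contains \<sigma> \<pi>" unfolding contains_def by (metis inf_le2)
qed

lemma contains_refl: "contains xs xs"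
  unfolding contains_alt using order_iso_refl by blast

lemma contains_trans: "contains a b \<Longrightarrow> contains b c \<Longrightarrow> contains a c"
proof -
  assume "contains a b" "contains b c"
  then obtain xs ys where 1: "subseq xs a" "order_iso xs b" and 2: "subseq ys b" "order_iso ys c"
    unfolding contains_alt by blast
  obtain ws where "subseq ws xs" "order_iso ys ws"
    using order_iso_subseq[OF 2(1) order_iso_sym[OF 1(2)]] by blast
  then show "contains a c" unfolding contains_alt
    using 1 2 order_iso_trans order_iso_sym subseq_order.order_trans by metis
qed

lemma subseq_extend:
  "subseq xs s \<Longrightarrow> length xs < length s \<Longrightarrow>
   \<exists>ys. subseq ys s \<and> length ys = Suc (length xs) \<and> subseq xs ys"
proof (induction s arbitrary: xs)
  case Nil
  then show ?case by simp
next
  case (Cons a s)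
  show ?case
  proof (cases "subseq xs s")
    case True
    show ?thesis
    proof (cases "length xs < length s")
      case True
      with Cons.IH \<open>subseq xs s\<close> show ?thesis by (meson list_emb_Cons)
    next
      case False
      with Cons.prems have "length xs = length s" by simp
      then have "xs = s" using \<open>subseq xs s\<close> subseq_same_length by blast
      then show ?thesis using Cons.prems by (intro exI[of _ "a # s"]) auto
    qed
  next
    case False
    with Cons.prems obtain xs' where xs: "xs = a # xs'" "subseq xs' s"
      by (cases xs) (auto split: if_splits)
    with Cons.prems have "length xs' < length s" by simp
    with Cons.IH xs obtain ys where "subseq ys s" "length ys = Suc (length xs')" "subseq xs' ys"
      by blast
    then show ?thesis using xs by (intro exI[of _ "a # ys"]) auto
  qed
qed

lemma perms_length: "xs \<in> perms n \<Longrightarrow> length xs = n"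
  unfolding perms_def using distinct_card by fastforce

lemma pattern_exists:
  fixes ys :: "nat list"
  assumes d: "distinct ys"
  shows "\<exists>\<alpha>\<in>perms (length ys). order_iso ys \<alpha>"
proof -
  define rk where "rk x = card {y \<in> set ys. y \<le> x}" for x
  have lt: "rk x < rk x'" if "x' \<in> set ys" "x < x'" for x x'
  proof -
    have "x' \<in> {y \<in> set ys. y \<le> x'}" "x' \<notin> {y \<in> set ys. y \<le> x}" using that by auto
    moreover have "{y \<in> set ys. y \<le> x} \<subseteq> {y \<in> set ys. y \<le> x'}" using that by auto
    ultimately have "{y \<in> set ys. y \<le> x} \<subset> {y \<in> set ys. y \<le> x'}" by blast
    then show ?thesis unfolding rk_def by (rule psubset_card_mono[rotated]) auto
  qed
  have le: "rk x' \<le> rk x" if "x' \<le> x" for x x'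
    unfolding rk_def by (rule card_mono) (use that in auto)
  define \<alpha> where "\<alpha> = map rk ys"
  have inj: "inj_on rk (set ys)"
    by (metis inj_onI lt nat_neq_iff)
  have dist: "distinct \<alpha>" unfolding \<alpha>_def using d inj by (simp add: distinct_map)
  have sub: "set \<alpha> \<subseteq> {1..length ys}"
  proof
    fix r assume "r \<in> set \<alpha>"
    then obtain x where x: "x \<in> set ys" "r = rk x" unfolding \<alpha>_def by auto
    have "1 \<le> rk x"
    proof -
      have "x \<in> {y \<in> set ys. y \<le> x}" using x(1) by simp
      moreover have "finite {y \<in> set ys. y \<le> x}" by simp
      ultimately have "card {x} \<le> card {y \<in> set ys. y \<le> x}" by (intro card_mono) auto
      then show ?thesis by (simp add: rk_def)
    qed
    moreover have "rk x \<le> card (set ys)" unfolding rk_def by (rule card_mono) auto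
    ultimately show "r \<in> {1..length ys}" using x distinct_card[OF d] by simp
  qed
  have "card (set \<alpha>) = length ys" using distinct_card[OF dist] \<alpha>_def by simp
  then have "set \<alpha> = {1..length ys}" using sub by (simp add: card_subset_eq)
  with dist have "\<alpha> \<in> perms (length ys)" unfolding perms_def by simp
  moreover have "order_iso ys \<alpha>"
    unfolding order_iso_def \<alpha>_def
  proof (intro conjI allI impI)
    fix i j assume ij: "i < j \<and> j < length ys"
    then have "ys ! i \<in> set ys" "ys ! j \<in> set ys" by auto
    then have "(ys ! i < ys ! j) = (rk (ys ! i) < rk (ys ! j))"
      using lt le by (meson leD linorder_not_le)
    then show "(ys ! i < ys ! j) = (map rk ys ! i < map rk ys ! j)"
      using ij by simp
  qed simp
  ultimately show ?thesis by blast
qed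

lemma nu_pow_Suc: "nu_pow (Suc p) k T = nu (k + p) (nu_pow p k T)"
  by simp

lemma nu_pow_0: "nu_pow 0 k T = T"
  by simp

declare nu_pow.simps[simp del]

lemma nu_pow_perms: "T \<subseteq> perms k \<Longrightarrow> nu_pow p k T \<subseteq> perms (k + p)"
proof (induction p)
  case 0
  then show ?case by (simp add: nu_pow_0)
next
  case (Suc p)
  then show ?case by (auto simp: nu_pow_Suc nu_def V_def)
qed

lemma nu_pow_contains: "\<alpha> \<in> nu_pow p k T \<Longrightarrow> \<exists>\<tau>\<in>T. contains \<alpha> \<tau>"
proof (induction p arbitrary: \<alpha>)
  case 0
  then show ?case using contains_refl by (auto simp: nu_pow_0)
next
  case (Suc p)
  then obtain \<beta> where "\<beta> \<in> nu_pow p k T" "contains \<alpha> \<beta>"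
    by (auto simp: nu_pow_Suc nu_def V_def)
  then show ?case using Suc.IH contains_trans by blast
qed

lemma contains_nu_pow:
  assumes T: "T \<subseteq> perms k" and s: "\<sigma> \<in> perms n" and t: "\<tau> \<in> T" "contains \<sigma> \<tau>"
  shows "k + p \<le> n \<Longrightarrow> \<exists>\<alpha>\<in>nu_pow p k T. contains \<sigma> \<alpha>"
proof (induction p)
  case 0
  then show ?case using t by (auto simp: nu_pow_0)
next
  case (Suc p)
  then obtain \<alpha> where a: "\<alpha> \<in> nu_pow p k T" "contains \<sigma> \<alpha>" by auto
  have la: "length \<alpha> = k + p" using a(1) nu_pow_perms[OF T] perms_length by blast
  have ls: "length \<sigma> = n" using s perms_length by blast
  have ds: "distinct \<sigma>" using s unfolding perms_def by simp
  obtain xs where xs: "subseq xs \<sigma>" "order_iso xs \<alpha>" using a(2) unfolding contains_alt by blast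
  have "length xs = k + p" using xs(2) la unfolding order_iso_def by simp
  then have "length xs < length \<sigma>" using Suc.prems ls by simp
  then obtain ys where ys: "subseq ys \<sigma>" "length ys = Suc (length xs)" "subseq xs ys"
    using subseq_extend[OF xs(1)] by blast
  have "distinct ys" using ys(1) ds subseq_conv_nths distinct_nthsI by metis
  then obtain \<alpha>' where a': "\<alpha>' \<in> perms (length ys)" "order_iso ys \<alpha>'"
    using pattern_exists by blast
  have c1: "contains \<sigma> \<alpha>'" unfolding contains_alt using ys(1) a'(2) by blast
  obtain ws where ws: "subseq ws \<alpha>'" "order_iso xs ws"
    using order_iso_subseq[OF ys(3) a'(2)] by blast
  have c2: "contains \<alpha>' \<alpha>" unfolding contains_alt
    using ws xs(2) order_iso_sym order_iso_trans by blast
  have "length ys = k + Suc p" using ys(2) \<open>length xs = k + p\<close> by simp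
  then have "\<alpha>' \<in> nu_pow (Suc p) k T"
    using a'(1) c2 a(1) by (auto simp: nu_pow_Suc nu_def V_def)
  then show ?case using c1 by blast
qed

theorem theorem2p8:
  fixes T :: "nat list set" and k p n :: nat
  assumes "T \<subseteq> perms k" and "p \<ge> 1" and "n \<ge> k + p + 1"
  shows "avoiders n (nu_pow p k T) = avoiders n T"
proof
  show "avoiders n (nu_pow p k T) \<subseteq> avoiders n T"
  proof
    fix \<sigma> assume "\<sigma> \<in> avoiders n (nu_pow p k T)"
    then have s: "\<sigma> \<in> perms n" and av: "\<forall>\<pi>\<in>nu_pow p k T. \<not> contains \<sigma> \<pi>"
      unfolding avoiders_def by auto
    have "\<not> contains \<sigma> \<tau>" if "\<tau> \<in> T" for \<tau>
      using contains_nu_pow[OF assms(1) s that, of p] av assms(3) by auto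
    then show "\<sigma> \<in> avoiders n T" using s unfolding avoiders_def by auto
  qed
next
  show "avoiders n T \<subseteq> avoiders n (nu_pow p k T)"
  proof
    fix \<sigma> assume "\<sigma> \<in> avoiders n T"
    then have s: "\<sigma> \<in> perms n" and av: "\<forall>\<pi>\<in>T. \<not> contains \<sigma> \<pi>"
      unfolding avoiders_def by auto
    have "\<not> contains \<sigma> \<alpha>" if "\<alpha> \<in> nu_pow p k T" for \<alpha>
      using nu_pow_contains[OF that] av contains_trans by blast
    then show "\<sigma> \<in> avoiders n (nu_pow p k T)" using s unfolding avoiders_def by auto
  qed
qed

end
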